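(* Let $\Omega\subset\mathbb{R}^N$ be a bounded open set, $r>0$, $L>0$, $M_0\in\mathbb{N}$, $\omega$ a modulus of continuity, and let $K\in\mathcal{FR}(r,L,M_0,\omega)$ with a given decomposition. Then for every $x\in K$ and every $\bar r>0$ there exist $\bar s>0$, depending only on $r,L,M_0,\omega,\bar r$, and $y\in B_{\bar r/2}(x)\cap K$ such that $\mathrm{dist}(y,\mathrm{sing}(K))\ge\bar s$.
   Context: A modulus of continuity is a non-decreasing left-continuous $\omega:(0,\infty)\to(0,\infty)$ with $\omega(0^+)=0$. Let $\pi=\{y_N=0\}$, $\pi^+=\{y\in\pi:y_{N-1}\ge0\}$. A nonempty compact $K\subset\overline\Omega$ is a Lipschitz hypersurface with constants $r,L$ if for each $x\in K$ there is $\Phi_x:B_r(x)\to\mathbb{R}^N$ with $L^{-1}|z_1-z_2|\le|\Phi_x(z_1)-\Phi_x(z_2)|\le L|z_1-z_2|$, $\Phi_x(x)=0$, $\Phi_x(K\cap B_r(x))\subset\pi$; $x$ is interior if $B_\delta(0)\cap\pi\subset\Phi_x(K\cap B_r(x))$ for some $\delta>0$; $\mathrm{bdry}(K)$ = non-interior points. $\mathcal{MR}(r,L)$: such $K$ with $\Phi_x(K\cap B_r(x))=\Phi_x(B_r(x))\cap\pi^+$ for $x\in\mathrm{bdry}(K)$. $\mathcal{FR}(r,L,M_0)$: Lipschitz hypersurfaces with constants $r,L$ of the form $\bigcup_{j=1}^JH^j$, $H^j\in\mathcal{MR}(r,L)$, $J\le M_0$, with $\mathrm{sing}=\bigcup_j\mathrm{bdry}(H^j)$.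 $K\in\mathcal{FR}(r,L,M_0,\omega)$ if $K=\bigcup_{i=1}^MK^i$, $K^i\in\mathcal{FR}(r,L,M_0)$ with chosen decompositions, such that for each $i$ and $x\in K^i$ with $\mathrm{dist}(x,\mathrm{sing}(K^i))=\delta>0$, $\mathrm{dist}(x,\bigcup_{j\ne i}K^j)\ge\omega(\delta)$; $\mathrm{sing}(K)=\bigcup_i\mathrm{sing}(K^i)$. *)

theory Defs
  imports "HOL-Analysis.Analysis"
begin

text \<open>Ambient space R^N is modelled as (real,'n) vec with a linearly ordered finite index
  type 'n; the N-th coordinate is the largest index, the (N-1)-th the second largest.\<close>

definition idxN :: "'n::{finite,linorder}" where
  "idxN = Max UNIV"

definition idxN1 :: "'n::{finite,linorder}" where
  "idxN1 = Max (UNIV - {idxN})"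

definition piN :: "((real,'n::{finite,linorder}) vec) set" where
  "piN = {y. y $ idxN = 0}"

definition piN_plus :: "((real,'n::{finite,linorder}) vec) set" where
  "piN_plus = {y \<in> piN. y $ idxN1 \<ge> 0}"

definition modulus_of_continuity :: "(real \<Rightarrow> real) \<Rightarrow> bool" where
  "modulus_of_continuity \<omega> \<longleftrightarrow>
     (\<forall>t>0. \<omega> t > 0) \<and>
     (\<forall>s t. 0 < s \<longrightarrow> s \<le> t \<longrightarrow> \<omega> s \<le> \<omega> t) \<and>
     (\<forall>t>0. (\<omega> \<longlongrightarrow> \<omega> t) (at_left t)) \<and>
     (\<omega> \<longlongrightarrow> 0) (at_right 0)"

definition lip_chart ::
  "real \<Rightarrow> real \<Rightarrow> ((real,'n::{finite,linorder}) vec) set \<Rightarrow> (real,'n) vec \<Rightarrow> ((real,'n) vec \<Rightarrow> (real,'n) vec) \<Rightarrow> bool" where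
  "lip_chart r L K x \<Phi> \<longleftrightarrow>
     (\<forall>z1\<in>ball x r. \<forall>z2\<in>ball x r.
        dist z1 z2 / L \<le> dist (\<Phi> z1) (\<Phi> z2) \<and> dist (\<Phi> z1) (\<Phi> z2) \<le> L * dist z1 z2) \<and>
     \<Phi> x = 0 \<and> \<Phi> ` (K \<inter> ball x r) \<subseteq> piN"

definition lip_hypersurface ::
  "((real,'n::{finite,linorder}) vec) set \<Rightarrow> real \<Rightarrow> real \<Rightarrow> ((real,'n) vec) set \<Rightarrow> bool" where
  "lip_hypersurface \<Omega> r L K \<longleftrightarrow>
     K \<noteq> {} \<and> compact K \<and> K \<subseteq> closure \<Omega> \<and> (\<forall>x\<in>K. \<exists>\<Phi>. lip_chart r L K x \<Phi>)"

definition interior_pt ::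
  "real \<Rightarrow> real \<Rightarrow> ((real,'n::{finite,linorder}) vec) set \<Rightarrow> (real,'n) vec \<Rightarrow> bool" where
  "interior_pt r L K x \<longleftrightarrow>
     (\<exists>\<Phi>. lip_chart r L K x \<Phi> \<and> (\<exists>\<delta>>0. ball 0 \<delta> \<inter> piN \<subseteq> \<Phi> ` (K \<inter> ball x r)))"

definition bdry ::
  "real \<Rightarrow> real \<Rightarrow> ((real,'n::{finite,linorder}) vec) set \<Rightarrow> ((real,'n) vec) set" where
  "bdry r L K = {x \<in> K. \<not> interior_pt r L K x}"

definition MR ::
  "((real,'n::{finite,linorder}) vec) set \<Rightarrow> real \<Rightarrow> real \<Rightarrow> ((real,'n) vec) set \<Rightarrow> bool" where
  "MR \<Omega> r L K \<longleftrightarrow> lip_hypersurface \<Omega> r L K \<and>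
     (\<forall>x\<in>bdry r L K. \<exists>\<Phi>. lip_chart r L K x \<Phi> \<and>
        \<Phi> ` (K \<inter> ball x r) = \<Phi> ` (ball x r) \<inter> piN_plus)"

text \<open>FR(r,L,M0) with a chosen decomposition, given as the list Hs of pieces H^j.\<close>
definition FR ::
  "((real,'n::{finite,linorder}) vec) set \<Rightarrow> real \<Rightarrow> real \<Rightarrow> nat \<Rightarrow> ((real,'n) vec) set list \<Rightarrow> bool" where
  "FR \<Omega> r L M0 Hs \<longleftrightarrow> lip_hypersurface \<Omega> r L (\<Union>(set Hs)) \<and>
     length Hs \<le> M0 \<and> (\<forall>H\<in>set Hs. MR \<Omega> r L H)"

definition sing_FR :: "real \<Rightarrow> real \<Rightarrow> ((real,'n::{finite,linorder}) vec) set list \<Rightarrow> ((real,'n) vec) set" where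
  "sing_FR r L Hs = (\<Union>H\<in>set Hs. bdry r L H)"

text \<open>FR(r,L,M0,omega) with a chosen decomposition D: K^i = \<Union> set (D!i).
  The separation condition dist(x, sing K^i) = delta > 0 ==> dist(x, other K^j) >= omega delta
  is written with pointwise distances (distance to the empty set = +infinity).\<close>
definition FR_omega ::
  "((real,'n::{finite,linorder}) vec) set \<Rightarrow> real \<Rightarrow> real \<Rightarrow> nat \<Rightarrow> (real \<Rightarrow> real) \<Rightarrow>
   ((real,'n) vec) set list list \<Rightarrow> bool" where
  "FR_omega \<Omega> r L M0 \<omega> D \<longleftrightarrow> D \<noteq> [] \<and>
     (\<forall>i<length D. FR \<Omega> r L M0 (D!i)) \<and>
     (\<forall>i<length D. \<forall>x\<in>\<Union>(set (D!i)). \<forall>\<delta>>0.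
        (\<forall>z\<in>sing_FR r L (D!i). \<delta> \<le> dist x z) \<longrightarrow>
        (\<forall>j<length D. j \<noteq> i \<longrightarrow> (\<forall>z\<in>\<Union>(set (D!j)). \<omega> \<delta> \<le> dist x z)))"

definition K_of :: "((real,'n::{finite,linorder}) vec) set list list \<Rightarrow> ((real,'n) vec) set" where
  "K_of D = (\<Union>Hs\<in>set D. \<Union>(set Hs))"

definition sing_K :: "real \<Rightarrow> real \<Rightarrow> ((real,'n::{finite,linorder}) vec) set list list \<Rightarrow> ((real,'n) vec) set" where
  "sing_K r L D = (\<Union>Hs\<in>set D. sing_FR r L Hs)"

end

theory Submission
  imports Defs
begin


lemma lemT:
  fixes f :: "'a::euclidean_space \<Rightarrow> 'a"
  assumes S: "subspace S" and aS: "a \<in> S" and t: "t > 0" and C: "C > 0"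
    and fS: "\<forall>u\<in>S\<inter>ball a t. f u \<in> S"
    and lo: "\<forall>u\<in>S\<inter>ball a t. \<forall>v\<in>S\<inter>ball a t. dist u v \<le> C * dist (f u) (f v)"
    and cont: "continuous_on (S\<inter>ball a t) f"
  shows "S \<inter> ball (f a) (t/C) \<subseteq> f ` (S\<inter>ball a t)"
proof
  fix w assume w: "w \<in> S \<inter> ball (f a) (t/C)"
  define t' where "t' = (t + C * dist (f a) w)/2"
  have dw: "C * dist (f a) w < t" using w C by (auto simp: field_simps)
  have t't: "t' < t" and wt': "dist (f a) w < t'/C" using dw C zero_le_dist[of "f a" w]
    by (auto simp: t'_def field_simps)
  have t'pos: "t' > 0" unfolding t'_def using t C by (simp add: add_pos_nonneg)
  define V where "V = S \<inter> ball (f a) (t'/C)"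
  define A where "A = V \<inter> f ` (S \<inter> ball a t')"
  have sub1: "S \<inter> ball a t' \<subseteq> S \<inter> ball a t" using t't by auto
  have sub2: "S \<inter> cball a t' \<subseteq> S \<inter> ball a t" using t't by auto
  have "connected V" unfolding V_def
    by (intro convex_connected convex_Int subspace_imp_convex S convex_ball)
  moreover have "openin (top_of_set V) A"
  proof -
    have "openin (top_of_set S) (f ` (S \<inter> ball a t'))"
    proof (rule invariance_of_domain_subspaces[OF _ S S order_refl])
      show "openin (top_of_set S) (S \<inter> ball a t')" by auto
      show "continuous_on (S \<inter> ball a t') f" using continuous_on_subset[OF cont sub1] .
      show "f \<in> S \<inter> ball a t' \<rightarrow> S" using fS sub1 by auto
      show "inj_on f (S \<inter> ball a t')"
      proof (rule inj_onI)
        fix u v assume "u \<in> S \<inter> ball a t'" "v \<in> S \<inter> ball a t'" "f u = f v"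
        then show "u = v" using lo sub1 by (metis dist_eq_0_iff in_mono mult_zero_right order_antisym zero_le_dist)
      qed
    qed
    then obtain U where U: "open U" "f ` (S \<inter> ball a t') = S \<inter> U" by (auto simp: openin_open)
    have "A = V \<inter> U" using U(2) by (auto simp: A_def V_def)
    then show ?thesis using U(1) by (simp add: openin_open_Int)
  qed
  moreover have "closedin (top_of_set V) A"
  proof -
    have "A = V \<inter> f ` (S \<inter> cball a t')"
    proof
      show "A \<subseteq> V \<inter> f ` (S \<inter> cball a t')" unfolding A_def by auto
      show "V \<inter> f ` (S \<inter> cball a t') \<subseteq> A"
      proof
        fix z assume z: "z \<in> V \<inter> f ` (S \<inter> cball a t')"
        then obtain u where u: "u \<in> S \<inter> cball a t'" "z = f u" by auto
        have "dist a u \<le> C * dist (f a) (f u)" using lo aS t u sub2 by auto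
        also have "\<dots> < t'" using z u C unfolding V_def by (auto simp: field_simps dist_commute)
        finally show "z \<in> A" using u z unfolding A_def by auto
      qed
    qed
    moreover have "compact (f ` (S \<inter> cball a t'))"
      by (intro compact_continuous_image continuous_on_subset[OF cont sub2] closed_Int_compact
          compact_cball closed_subspace S)
    ultimately show ?thesis by (simp add: closedin_closed_Int compact_imp_closed)
  qed
  moreover have "f a \<in> A" using aS t'pos C fS t unfolding A_def V_def by auto
  ultimately have "A = V" using connected_clopen by blast
  moreover have "w \<in> V" using w wt' unfolding V_def by auto
  ultimately show "w \<in> f ` (S \<inter> ball a t)" unfolding A_def using sub1 by auto
qed




lemma lip_cont:
  assumes "M > 0" "\<forall>u\<in>X. \<forall>v\<in>X. dist (f u) (f v) \<le> M * dist u v"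
  shows "continuous_on X f"
  unfolding continuous_on_iff
proof (intro ballI allI impI)
  fix x e assume x: "x \<in> X" and e: "(0::real) < e"
  show "\<exists>d>0. \<forall>x'\<in>X. dist x' x < d \<longrightarrow> dist (f x') (f x) < e"
  proof (intro exI[of _ "e/M"] conjI ballI impI)
    show "e/M > 0" using assms e by simp
    fix x' assume "x' \<in> X" "dist x' x < e/M"
    then have "dist (f x') (f x) \<le> M * dist x' x" "M * dist x' x < e" using assms x
      by (auto simp: field_simps)
    then show "dist (f x') (f x) < e" by linarith
  qed
qed

lemma subspace_piN: "subspace (piN :: (real,'n::{finite,linorder}) vec set)"
  unfolding subspace_def piN_def by auto

lemma chart_L:
  assumes "lip_chart r L K x \<Phi>" "r > 0" "L > 0"
  shows "L \<ge> 1"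
proof -
  define z where "z = x + (r/2) *\<^sub>R axis (undefined) 1"
  have dz: "dist x z = r/2" using assms(2) by (simp add: z_def dist_norm)
  then have "z \<in> ball x r" "x \<in> ball x r" using assms(2) by auto
  then have "dist x z / L \<le> L * dist x z" using assms(1) unfolding lip_chart_def
    by (meson order_trans)
  then have "(r/2) / L \<le> L * (r/2)" using dz by simp
  then have "1 \<le> L * L" using assms(2,3) by (simp add: field_simps)
  show ?thesis
  proof (rule ccontr)
    assume "\<not> L \<ge> 1"
    then have "L*L < 1*1" using assms(3) by (intro mult_strict_mono) auto
    then show False using \<open>1 \<le> L * L\<close> by simp
  qed
qed




lemma deep_far:
  fixes H :: "(real,'n::{finite,linorder}) vec set" and \<gamma> :: "(real,'n) vec \<Rightarrow> (real,'n) vec"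
  assumes LH: "lip_hypersurface \<Omega> r L H" and L1: "L \<ge> 1" and r: "r > 0"
    and tau: "\<tau> > 0" "\<tau> \<le> r/(8*L)"
    and g0: "\<gamma> 0 = y"
    and gH: "\<forall>u\<in>piN \<inter> ball 0 \<tau>. \<gamma> u \<in> H"
    and gL: "\<forall>u\<in>piN \<inter> ball 0 \<tau>. \<forall>v\<in>piN \<inter> ball 0 \<tau>.
               dist u v / L \<le> dist (\<gamma> u) (\<gamma> v) \<and> dist (\<gamma> u) (\<gamma> v) \<le> L * dist u v"
  shows "\<forall>q\<in>bdry r L H. \<tau>/(4*L^3) \<le> dist y q"
proof (rule ccontr)
  assume "\<not> ?thesis"
  then obtain q where qb: "q \<in> bdry r L H" and dq: "dist y q < \<tau>/(4*L^3)" by (auto simp: not_le)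
  have qH: "q \<in> H" using qb by (simp add: bdry_def)
  obtain \<Phi> where ch: "lip_chart r L H q \<Phi>" using LH qH by (auto simp: lip_hypersurface_def)
  define t0 where "t0 = \<tau>/2"
  have t0: "t0 > 0" using tau by (simp add: t0_def)
  have L0: "L > 0" using L1 by simp
  have sub: "piN \<inter> ball 0 t0 \<subseteq> piN \<inter> ball 0 \<tau>" using tau by (auto simp: t0_def)
  have z0: "(0::(real,'n) vec) \<in> piN" by (simp add: piN_def)
  have L3: "L^3 \<ge> 1" using L1 by simp
  have "r/(8*L) \<le> r/8" using L1 r by (intro divide_left_mono) auto
  then have tr: "\<tau> \<le> r/8" using tau by simp
  have dq': "dist y q < \<tau>/4"
  proof -
    have "\<tau>/(4*L^3) \<le> \<tau>/4" using L3 tau L0 by (intro divide_left_mono) auto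
    then show ?thesis using dq by simp
  qed
  have inball: "\<gamma> u \<in> H \<inter> ball q r" if u: "u \<in> piN \<inter> ball 0 t0" for u
  proof -
    have uu: "u \<in> piN \<inter> ball 0 \<tau>" using u sub by auto
    have "dist (\<gamma> u) (\<gamma> 0) \<le> L * dist u 0" using gL[rule_format, OF uu, of 0] z0 tau by auto
    also have "\<dots> \<le> L * t0" using u L0 by (auto simp: dist_commute less_imp_le)
    finally have a: "dist (\<gamma> u) y \<le> L * t0" using g0 by simp
    have "L * t0 \<le> r/16" using tau L0 by (simp add: t0_def field_simps)
    then have "dist (\<gamma> u) q < r" using a dq' tau tr r dist_triangle[of "\<gamma> u" q y] by linarith
    then show ?thesis using gH uu by (auto simp: dist_commute)
  qed
  have phiL: "\<forall>z1\<in>ball q r. \<forall>z2\<in>ball q r. dist z1 z2 / L \<le> dist (\<Phi> z1) (\<Phi> z2) \<and> dist (\<Phi> z1) (\<Phi> z2) \<le> L * dist z1 z2"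
    and phi0: "\<Phi> q = 0" and phiN: "\<Phi> ` (H \<inter> ball q r) \<subseteq> piN"
    using ch by (auto simp: lip_chart_def)
  define f where "f = \<Phi> \<circ> \<gamma>"
  have fbi: "dist u v \<le> (L*L) * dist (f u) (f v) \<and> dist (f u) (f v) \<le> (L*L) * dist u v"
    if u: "u \<in> piN \<inter> ball 0 t0" and v: "v \<in> piN \<inter> ball 0 t0" for u v
  proof -
    have g: "dist u v / L \<le> dist (\<gamma> u) (\<gamma> v)" "dist (\<gamma> u) (\<gamma> v) \<le> L * dist u v" using gL[rule_format, of u v] u v sub by blast+
    have p: "dist (\<gamma> u) (\<gamma> v) / L \<le> dist (f u) (f v)" "dist (f u) (f v) \<le> L * dist (\<gamma> u) (\<gamma> v)"
      using phiL inball[OF u] inball[OF v] by (auto simp: f_def)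
    have "dist u v \<le> L * dist (\<gamma> u) (\<gamma> v)" using g(1) L0 by (simp add: field_simps)
    also have "\<dots> \<le> L * (L * dist (f u) (f v))" using p(1) L0 by (simp add: field_simps)
    finally have 1: "dist u v \<le> (L*L) * dist (f u) (f v)" by (simp add: mult.assoc)
    have "dist (f u) (f v) \<le> L * (L * dist u v)" using p(2) g(2) L0 by (meson mult_left_mono order_trans less_imp_le)
    then show ?thesis using 1 by (simp add: mult.assoc)
  qed
  have img: "piN \<inter> ball (f 0) (t0/(L*L)) \<subseteq> f ` (piN \<inter> ball 0 t0)"
  proof (rule lemT[OF subspace_piN z0 t0])
    show "L*L > 0" using L0 by simp
    show "\<forall>u\<in>piN \<inter> ball 0 t0. f u \<in> piN" using inball phiN by (auto simp: f_def)
    show "\<forall>u\<in>piN \<inter> ball 0 t0. \<forall>v\<in>piN \<inter> ball 0 t0. dist u v \<le> L * L * dist (f u) (f v)"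
      using fbi by blast
    show "continuous_on (piN \<inter> ball 0 t0) f"
      by (rule lip_cont[of "L*L"]) (use fbi L0 in auto)
  qed
  have f0: "dist (f 0) 0 < t0/(2*(L*L))"
  proof -
    have "(0::(real,'n) vec) \<in> piN \<inter> ball 0 t0" using z0 t0 by simp
    then have "dist (f 0) (\<Phi> q) \<le> L * dist y q" using phiL inball[of 0] r g0 by (auto simp: f_def)
    also have "\<dots> < L * (\<tau>/(4*L^3))" using dq L0 by (intro mult_strict_left_mono) auto
    also have "\<dots> = t0/(2*(L*L))" using L0 by (simp add: t0_def power3_eq_cube field_simps)
    finally show ?thesis using phi0 by simp
  qed
  have "ball (0::(real,'n) vec) (t0/(2*(L*L))) \<inter> piN \<subseteq> \<Phi> ` (H \<inter> ball q r)"
  proof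
    fix w :: "(real,'n) vec" assume w: "w \<in> ball 0 (t0/(2*(L*L))) \<inter> piN"
    have "dist (f 0) w \<le> dist (f 0) 0 + dist 0 w" by (rule dist_triangle)
    also have "\<dots> < t0/(2*(L*L)) + t0/(2*(L*L))" using f0 w by (intro add_strict_mono) auto
    also have "\<dots> = t0/(L*L)" by simp
    finally have "dist (f 0) w < t0/(L*L)" .
    then have "w \<in> f ` (piN \<inter> ball 0 t0)" using img w by auto
    then show "w \<in> \<Phi> ` (H \<inter> ball q r)" using inball by (auto simp: f_def)
  qed
  then have "interior_pt r L H q" unfolding interior_pt_def using ch t0 L0
    by (intro exI[of _ \<Phi>] conjI exI[of _ "t0/(2*(L*L))"]) auto
  then show False using qb by (simp add: bdry_def)
qed




lemma bdry_step:
  fixes H :: "(real,'n::{finite,linorder}) vec set" and e :: "(real,'n) vec"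
  assumes MR: "MR \<Omega> r L H" and L1: "L \<ge> 1" and r: "r > 0"
    and e: "e \<in> piN" "e $ idxN1 = 1" "norm e = 1"
    and s: "s > 0" "s \<le> r/2"
    and qb: "q \<in> bdry r L H"
  shows "\<exists>y\<in>H. dist y q \<le> s/4 \<and> (\<forall>q'\<in>bdry r L H. s/(16*L^4) \<le> dist y q')"
proof -
  have L0: "L > 0" using L1 by simp
  obtain \<Psi> where ch: "lip_chart r L H q \<Psi>" and half: "\<Psi> ` (H \<inter> ball q r) = \<Psi> ` (ball q r) \<inter> piN_plus"
    using MR qb unfolding MR_def by blast
  have psiL: "\<forall>z1\<in>ball q r. \<forall>z2\<in>ball q r. dist z1 z2 / L \<le> dist (\<Psi> z1) (\<Psi> z2) \<and> dist (\<Psi> z1) (\<Psi> z2) \<le> L * dist z1 z2"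
    and psi0: "\<Psi> q = 0" using ch by (auto simp: lip_chart_def)
  have injP: "inj_on \<Psi> (ball q r)"
  proof (rule inj_onI)
    fix u v assume "u \<in> ball q r" "v \<in> ball q r" "\<Psi> u = \<Psi> v"
    then have "dist u v / L \<le> 0" using psiL by fastforce
    then show "u = v" using L0 by (simp add: divide_le_0_iff)
  qed
  have bigball: "UNIV \<inter> ball (\<Psi> q) (r/L) \<subseteq> \<Psi> ` (UNIV \<inter> ball q r)"
  proof (rule lemT[OF subspace_UNIV _ r L0])
    show "q \<in> UNIV" by simp
    show "\<forall>u\<in>UNIV \<inter> ball q r. \<Psi> u \<in> UNIV" by simp
    show "\<forall>u\<in>UNIV \<inter> ball q r. \<forall>v\<in>UNIV \<inter> ball q r. dist u v \<le> L * dist (\<Psi> u) (\<Psi> v)"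
      using psiL L0 by (auto simp: field_simps)
    show "continuous_on (UNIV \<inter> ball q r) \<Psi>"
      by (rule lip_cont[of L]) (use psiL L0 in auto)
  qed
  define \<tau> where "\<tau> = s/(4*L)"
  have tau: "\<tau> > 0" "\<tau> \<le> r/(8*L)" using s L0 by (auto simp: \<tau>_def field_simps)
  define \<gamma> where "\<gamma> u = inv_into (ball q r) \<Psi> (\<tau> *\<^sub>R e + u)" for u
  have gprop: "\<gamma> u \<in> H \<inter> ball q r \<and> \<Psi> (\<gamma> u) = \<tau> *\<^sub>R e + u" if u: "u \<in> piN \<inter> ball 0 \<tau>" for u :: "(real,'n) vec"
  proof -
    define w where "w = \<tau> *\<^sub>R e + u"
    have wN: "w \<in> piN" using u e(1) unfolding w_def
      by (intro subspace_add[OF subspace_piN] subspace_scale[OF subspace_piN]) auto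
    have "\<bar>u $ idxN1\<bar> \<le> norm u" by (rule component_le_norm_cart)
    then have "w $ idxN1 > 0" using u tau e(2) by (auto simp: w_def)
    then have wP: "w \<in> piN_plus" using wN by (simp add: piN_plus_def)
    have "norm w \<le> \<tau> * norm e + norm u" unfolding w_def using norm_triangle_ineq[of "\<tau> *\<^sub>R e" u] tau
      by simp
    also have "\<dots> < 2 * \<tau>" using u e(3) by simp
    also have "\<dots> \<le> r/L"
    proof -
      have "L * (\<tau> * 8) \<le> r" using tau L0 by (simp add: field_simps)
      moreover have "L * (\<tau> * 2) \<le> L * (\<tau> * 8)" using tau L0 by simp
      ultimately have "L * (\<tau> * 2) \<le> r" by linarith
      then show ?thesis using L0 by (simp add: field_simps)
    qed
    finally have "w \<in> \<Psi> ` (ball q r)" using bigball psi0 by auto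
    then have "w \<in> \<Psi> ` (H \<inter> ball q r)" using half wP by auto
    then obtain h where h: "h \<in> H \<inter> ball q r" "\<Psi> h = w" by auto
    have "\<gamma> u = h" unfolding \<gamma>_def w_def[symmetric] using h injP by (metis IntD2 inv_into_f_f)
    then show ?thesis using h w_def by simp
  qed
  define y where "y = \<gamma> 0"
  have z0: "(0::(real,'n) vec) \<in> piN \<inter> ball 0 \<tau>" using tau by (simp add: piN_def)
  have gL: "\<forall>u\<in>piN \<inter> ball 0 \<tau>. \<forall>v\<in>piN \<inter> ball 0 \<tau>.
               dist u v / L \<le> dist (\<gamma> u) (\<gamma> v) \<and> dist (\<gamma> u) (\<gamma> v) \<le> L * dist u v"
  proof (intro ballI)
    fix u v :: "(real,'n) vec" assume u: "u \<in> piN \<inter> ball 0 \<tau>" and v: "v \<in> piN \<inter> ball 0 \<tau>"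
    have d: "dist (\<Psi> (\<gamma> u)) (\<Psi> (\<gamma> v)) = dist u v" using gprop[OF u] gprop[OF v] by simp
    have "dist (\<gamma> u) (\<gamma> v) / L \<le> dist u v" "dist (\<Psi> (\<gamma> u)) (\<Psi> (\<gamma> v)) \<le> L * dist (\<gamma> u) (\<gamma> v)"
      using psiL[rule_format, of "\<gamma> u" "\<gamma> v"] gprop[OF u] gprop[OF v] d by auto
    then show "dist u v / L \<le> dist (\<gamma> u) (\<gamma> v) \<and> dist (\<gamma> u) (\<gamma> v) \<le> L * dist u v"
      using d L0 by (auto simp: field_simps)
  qed
  have far: "\<forall>q'\<in>bdry r L H. \<tau>/(4*L^3) \<le> dist y q'"
    by (rule deep_far[of \<Omega> r L H \<tau> \<gamma> y]) (use MR L1 r tau gprop gL in \<open>auto simp: MR_def y_def\<close>)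
  have "\<tau>/(4*L^3) = s/(16*L^4)" using L0 by (simp add: \<tau>_def field_simps power_def)
  moreover have "y \<in> H" using gprop[OF z0] by (simp add: y_def)
  moreover have "dist y q \<le> s/4"
  proof -
    have "dist y q / L \<le> dist (\<Psi> y) (\<Psi> q)" using psiL[rule_format, of "\<gamma> 0" q] gprop[OF z0] ch r by (auto simp: y_def dist_commute)
    also have "\<dots> = \<tau>" using gprop[OF z0] psi0 e(3) tau by (simp add: y_def)
    finally show ?thesis using L0 by (simp add: \<tau>_def field_simps)
  qed
  ultimately show ?thesis using far by auto
qed




lemma multi_step:
  fixes Hs :: "(real,'n::{finite,linorder}) vec set list" and e :: "(real,'n) vec"
  assumes MR: "\<forall>H\<in>set Hs. MR \<Omega> r L H" and L1: "L \<ge> 1" and r: "r > 0"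
    and e: "e \<in> piN" "e $ idxN1 = 1" "norm e = 1"
    and s0: "s0 > 0" "s0 \<le> r/2"
    and x: "x \<in> \<Union>(set Hs)"
    and F: "finite F" "F \<subseteq> set Hs"
  shows "\<exists>y\<in>\<Union>(set Hs). dist x y \<le> real (card F) * s0 \<and>
           (\<forall>H\<in>F. \<forall>q\<in>bdry r L H. s0 * (1/(16*L^4))^card F \<le> dist y q)"
  using F
proof (induction F rule: finite_induct)
  case empty
  then show ?case using x by auto
next
  case (insert H' F)
  define \<theta> where "\<theta> = 1/(16*L^4)"
  have L0: "L > 0" using L1 by simp
  have th: "\<theta> > 0" "\<theta> \<le> 1/16" using L1 by (auto simp: \<theta>_def field_simps)
  from insert obtain y where y: "y \<in> \<Union>(set Hs)" "dist x y \<le> real (card F) * s0"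
    and yF: "\<forall>H\<in>F. \<forall>q\<in>bdry r L H. s0 * \<theta>^card F \<le> dist y q" unfolding \<theta>_def by auto
  define s where "s = s0 * \<theta>^card F"
  have s: "s > 0" "s \<le> s0" using s0 th by (auto simp: s_def power_le_one mult_le_cancel_left1)
  have cF: "card (insert H' F) = Suc (card F)" using insert by simp
  have H'MR: "MR \<Omega> r L H'" and H'in: "H' \<in> set Hs" using MR insert by auto
  show ?case
  proof (cases "\<exists>q\<in>bdry r L H'. dist y q < s/2")
    case True
    then obtain q where q: "q \<in> bdry r L H'" "dist y q < s/2" by auto
    obtain y' where y': "y' \<in> H'" "dist y' q \<le> s/4" and far: "\<forall>q'\<in>bdry r L H'. s/(16*L^4) \<le> dist y' q'"
      using bdry_step[OF H'MR L1 r e s(1) _ q(1)] s s0 by fastforce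
    have dyy: "dist y y' < s" using dist_triangle[of y y' q] q y' s by (simp add: dist_commute)
    show ?thesis
    proof (intro bexI conjI)
      show "y' \<in> \<Union>(set Hs)" using y' H'in by auto
      show "dist x y' \<le> real (card (insert H' F)) * s0"
        using dist_triangle[of x y' y] y(2) dyy s cF by (simp add: algebra_simps)
      show "\<forall>H\<in>insert H' F. \<forall>q\<in>bdry r L H. s0 * (1/(16*L^4))^card (insert H' F) \<le> dist y' q"
      proof (intro ballI)
        fix H q' assume H: "H \<in> insert H' F" and q': "q' \<in> bdry r L H"
        have eq: "s0 * (1/(16*L^4))^card (insert H' F) = s * \<theta>" by (simp add: cF s_def \<theta>_def)
        show "s0 * (1/(16*L^4))^card (insert H' F) \<le> dist y' q'"
        proof (cases "H = H'")
          case True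
          then show ?thesis using far q' eq by (simp add: \<theta>_def)
        next
          case False
          then have "s \<le> dist y q'" using H q' yF by (auto simp: s_def)
          moreover have "dist y q' \<le> dist y y' + dist y' q'" by (rule dist_triangle)
          moreover have "s * \<theta> \<le> s/4" using th s by (simp add: field_simps)
          moreover have "dist y y' \<le> (3/4) * s"
            using dist_triangle[of y y' q] q y' by (simp add: dist_commute)
          ultimately show ?thesis using eq by linarith
        qed
      qed
    qed
  next
    case False
    show ?thesis
    proof (intro bexI conjI)
      show "y \<in> \<Union>(set Hs)" by (rule y)
      show "dist x y \<le> real (card (insert H' F)) * s0" using y(2) s0 cF by (simp add: algebra_simps)
      show "\<forall>H\<in>insert H' F. \<forall>q\<in>bdry r L H. s0 * (1/(16*L^4))^card (insert H' F) \<le> dist y q"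
      proof (intro ballI)
        fix H q' assume H: "H \<in> insert H' F" and q': "q' \<in> bdry r L H"
        have eq: "s0 * (1/(16*L^4))^card (insert H' F) = s * \<theta>" by (simp add: cF s_def \<theta>_def)
        have "s * \<theta> \<le> s/2" using th s by (simp add: field_simps)
        moreover have "s/2 \<le> dist y q'"
        proof (cases "H = H'")
          case True then show ?thesis using False q' by (auto simp: not_less)
        next
          case False
          then have "H \<in> F" using H by simp
          then have "s \<le> dist y q'" using q' yF by (simp add: s_def)
          then show ?thesis using s by linarith
        qed
        ultimately show "s0 * (1/(16*L^4))^card (insert H' F) \<le> dist y q'" using eq by linarith
      qed
    qed
  qed
qed




lemma idx_ne:
  assumes "CARD('n::{finite,linorder}) \<ge> 2"
  shows "(idxN1::'n) \<noteq> idxN"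
proof -
  have "UNIV - {idxN::'n} \<noteq> {}"
  proof
    assume "UNIV - {idxN::'n} = {}"
    then have "(UNIV::'n set) \<subseteq> {idxN}" by auto
    then have "CARD('n) \<le> 1" by (metis card.empty card_insert_disjoint card_mono empty_iff finite.emptyI finite.insertI One_nat_def)
    then show False using assms by simp
  qed
  then have "Max (UNIV - {idxN::'n}) \<in> UNIV - {idxN}" by (intro Max_in) auto
  then show ?thesis by (simp add: idxN1_def)
qed

theorem lemma3p9:
  fixes r L rb :: real and M0 :: nat and \<omega> :: "real \<Rightarrow> real"
  assumes "CARD('n::{finite,linorder}) \<ge> 2"
    and "r > 0" and "L > 0" and "modulus_of_continuity \<omega>" and "rb > 0"
  shows "\<exists>sb>0. \<forall>(\<Omega>::(real,'n) vec set) D.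
           bounded \<Omega> \<and> open \<Omega> \<and> FR_omega \<Omega> r L M0 \<omega> D \<longrightarrow>
           (\<forall>x\<in>K_of D. \<exists>y\<in>ball x (rb/2) \<inter> K_of D.
               \<forall>z\<in>sing_K r L D. sb \<le> dist y z)"
proof -
  define \<theta> where "\<theta> = 1/(16*L^4)"
  define s0 where "s0 = min (r/2) (rb/(4*(real M0+1)))"
  define \<delta> where "\<delta> = s0 * \<theta>^M0"
  define sb where "sb = min \<delta> (\<omega> \<delta>)"
  have th: "\<theta> > 0" using assms by (simp add: \<theta>_def)
  have s0: "s0 > 0" "s0 \<le> r/2" "s0 \<le> rb/(4*(real M0+1))"
    unfolding s0_def using assms by (simp, simp only: min.cobounded1, simp only: min.cobounded2)
  have dpos: "\<delta> > 0" using s0 th by (simp add: \<delta>_def)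
  have wpos: "\<omega> \<delta> > 0" using assms(4) dpos by (simp add: modulus_of_continuity_def)
  define e :: "(real,'n) vec" where "e = axis idxN1 1"
  have e: "e \<in> piN" "e $ idxN1 = 1" "norm e = 1"
    using idx_ne[OF assms(1)] by (auto simp: e_def piN_def axis_def[of idxN1 1] norm_axis_1[unfolded axis_def])
  show ?thesis
  proof (intro exI[of _ sb] conjI allI impI ballI)
    show "sb > 0" using dpos wpos by (simp add: sb_def)
    fix \<Omega> :: "(real,'n) vec set" and D x
    assume A: "bounded \<Omega> \<and> open \<Omega> \<and> FR_omega \<Omega> r L M0 \<omega> D" and x: "x \<in> K_of D"
    have FRo: "FR_omega \<Omega> r L M0 \<omega> D" using A by simp
    obtain Hs where Hs: "Hs \<in> set D" "x \<in> \<Union>(set Hs)" using x by (auto simp: K_of_def)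
    obtain i where i: "i < length D" "D!i = Hs" using Hs(1) by (auto simp: in_set_conv_nth)
    have "\<forall>i<length D. FR \<Omega> r L M0 (D!i)" using FRo unfolding FR_omega_def by blast
    then have FR: "FR \<Omega> r L M0 Hs" using i by blast
    have MRs: "\<forall>H\<in>set Hs. MR \<Omega> r L H" and len: "length Hs \<le> M0" using FR by (auto simp: FR_def)
    obtain H where H: "H \<in> set Hs" "x \<in> H" using Hs(2) by auto
    obtain \<Phi> where "lip_chart r L H x \<Phi>" using MRs H unfolding MR_def lip_hypersurface_def by metis
    then have L1: "L \<ge> 1" using chart_L assms by blast
    obtain y where y: "y \<in> \<Union>(set Hs)" "dist x y \<le> real (card (set Hs)) * s0"
      and far: "\<forall>H\<in>set Hs. \<forall>q\<in>bdry r L H. s0 * (1/(16*L^4))^card (set Hs) \<le> dist y q"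
      using multi_step[OF MRs L1 assms(2) e s0(1,2) Hs(2) List.finite_set order_refl] by blast
    have cM: "card (set Hs) \<le> M0" using len card_length[of Hs] by linarith
    have "1 \<le> L^4" using L1 by simp
    then have th1: "\<theta> \<le> 1" unfolding \<theta>_def by (simp add: divide_le_eq)
    have "\<theta>^M0 \<le> \<theta>^card (set Hs)" using cM th th1 by (intro power_decreasing) auto
    then have dle: "\<delta> \<le> s0 * \<theta>^card (set Hs)" using s0 by (simp add: \<delta>_def)
    have farH: "\<forall>z\<in>sing_FR r L (D!i). \<delta> \<le> dist y z"
    proof
      fix z assume "z \<in> sing_FR r L (D!i)"
      then obtain H0 where H0: "H0 \<in> set Hs" "z \<in> bdry r L H0" using i by (auto simp: sing_FR_def)
      then have "s0 * \<theta>^card (set Hs) \<le> dist y z" using far unfolding \<theta>_def by blast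
      then show "\<delta> \<le> dist y z" using dle by linarith
    qed
    have "dist x y < rb/2"
    proof -
      have "real (card (set Hs)) * s0 \<le> real M0 * s0" using cM s0 by (intro mult_right_mono) auto
      also have "\<dots> \<le> real M0 * (rb/(4*(real M0+1)))" using s0 by (intro mult_left_mono) auto
      also have "\<dots> < rb/2" using assms(5) by (simp add: field_simps add_pos_nonneg)
      finally show ?thesis using y by linarith
    qed
    moreover have "y \<in> K_of D" using y Hs by (auto simp: K_of_def)
    moreover have "sb \<le> dist y z" if z: "z \<in> sing_K r L D" for z
    proof -
      obtain Hs' where Hs': "Hs' \<in> set D" "z \<in> sing_FR r L Hs'" using z by (auto simp: sing_K_def)
      obtain j where j: "j < length D" "D!j = Hs'" using Hs'(1) by (auto simp: in_set_conv_nth)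
      show ?thesis
      proof (cases "j = i")
        case True
        then have "\<delta> \<le> dist y z" using farH Hs' j by simp
        then show ?thesis by (simp add: sb_def)
      next
        case False
        have yi: "y \<in> \<Union>(set (D!i))" using y i by simp
        have zj: "z \<in> \<Union>(set (D!j))" using Hs' j by (auto simp: sing_FR_def bdry_def)
        have sep: "\<forall>i<length D. \<forall>x\<in>\<Union>(set (D!i)). \<forall>\<delta>>0.
          (\<forall>z\<in>sing_FR r L (D!i). \<delta> \<le> dist x z) \<longrightarrow>
          (\<forall>j<length D. j \<noteq> i \<longrightarrow> (\<forall>z\<in>\<Union>(set (D!j)). \<omega> \<delta> \<le> dist x z))"
          using FRo unfolding FR_omega_def by blast
        have "\<omega> \<delta> \<le> dist y z"
          using sep i(1) yi dpos farH j(1) False zj by meson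
        then show ?thesis by (simp add: sb_def)
      qed
    qed
    ultimately show "\<exists>y\<in>ball x (rb/2) \<inter> K_of D. \<forall>z\<in>sing_K r L D. sb \<le> dist y z"
      by (intro bexI[of _ y]) auto
  qed
qed


end
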